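(* Let $\alpha\in(0,2)$, $(\alpha_n)\subset(0,2)$ with $\alpha_n\to\alpha$, $w$ a probability density on $[0,1]$ continuous on $[0,1)$, and $\{\tau_n\}$ a $w$-pre-chaotic sequence. With $\tilde z\sim\tau_n$, $x=T_n(\tilde z)$, $x_0=0$, the random function $\psi_n(\xi)=x_{k-1}$ for $\frac{k-1}n\le\xi<\frac kn$ ($1\le k\le n$), and $\phi_n(\xi)=\mathbb{E}[\psi_n(\xi)]$, let $\rho_n$ and $\nu_n$ be the push-forwards of Lebesgue measure on $[0,1]$ under $\psi_n$ and $\phi_n$ respectively. Then for every $\delta>0$, $$\lim_{n\to\infty}\mathbb{P}\{W_1(\rho_n,\nu_n)>\delta\}=0.$$
   Context: $S_1^{(n)}=\{\tilde z\in[0,\infty)^n:\sum_j\tilde z_j=1\}$. $\{\tau_n\}$ is $w$-pre-chaotic if, writing $n\mathbb{E}_{\tau_n}[\tilde z_j]=w(j/n)+r_n(j)$, for each $0<\xi_*<1$ there is $C$ depending only on $\xi_*$ such that for each $\epsilon>0$ there is $n_\epsilon$ with, for all $n>n_\epsilon$ and $j,k<n\xi_*$: $|r_n(j)|<\epsilon$, $\mathrm{Var}[\tilde z_j]\le C\epsilon/n$, $|\mathrm{Cov}(\tilde z_j,\tilde z_k)|\le C\epsilon/n^2$. $T_n(\tilde z)_j=n(1-\frac{\alpha_n}2)\sum_{i=1}^j\frac{\tilde z_i}{n+1-i}+\frac{j-1}{n-1}\alpha_n$. $W_1$ is the Kantorovich–Rubinstein distance. *)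

theory Defs
  imports "HOL-Probability.Probability"
begin

definition simplex1 :: "nat \<Rightarrow> (nat \<Rightarrow> real) set" where
  "simplex1 n = {z. (\<forall>j\<in>{1..n}. 0 \<le> z j) \<and> (\<Sum>j=1..n. z j) = 1}"

definition mean_coord :: "(nat \<Rightarrow> real) measure \<Rightarrow> nat \<Rightarrow> real" where
  "mean_coord M j = (\<integral>z. z j \<partial>M)"

definition var_coord :: "(nat \<Rightarrow> real) measure \<Rightarrow> nat \<Rightarrow> real" where
  "var_coord M j = (\<integral>z. (z j - mean_coord M j)\<^sup>2 \<partial>M)"

definition cov_coord :: "(nat \<Rightarrow> real) measure \<Rightarrow> nat \<Rightarrow> nat \<Rightarrow> real" where
  "cov_coord M j k = (\<integral>z. (z j - mean_coord M j) * (z k - mean_coord M k) \<partial>M)"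

definition pre_chaotic :: "(real \<Rightarrow> real) \<Rightarrow> (nat \<Rightarrow> (nat \<Rightarrow> real) measure) \<Rightarrow> bool" where
  "pre_chaotic w \<tau> \<longleftrightarrow>
    (\<forall>\<xi>s. 0 < \<xi>s \<and> \<xi>s < 1 \<longrightarrow>
      (\<exists>C::real. \<forall>\<epsilon>>0. \<exists>n\<epsilon>::nat. \<forall>n>n\<epsilon>. \<forall>j k.
         1 \<le> j \<and> 1 \<le> k \<and> real j < real n * \<xi>s \<and> real k < real n * \<xi>s \<longrightarrow>
           \<bar>real n * mean_coord (\<tau> n) j - w (real j / real n)\<bar> < \<epsilon>
         \<and> var_coord (\<tau> n) j \<le> C * \<epsilon> / real n
         \<and> (j \<noteq> k \<longrightarrow> \<bar>cov_coord (\<tau> n) j k\<bar> \<le> C * \<epsilon> / (real n)\<^sup>2)))"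

definition Tmap :: "real \<Rightarrow> nat \<Rightarrow> (nat \<Rightarrow> real) \<Rightarrow> nat \<Rightarrow> real" where
  "Tmap a n z j = real n * (1 - a / 2) * (\<Sum>i=1..j. z i / (real n + 1 - real i))
                  + (real j - 1) / (real n - 1) * a"

text \<open>psi_n(xi) = x_(k-1) for (k-1)/n <= xi < k/n, where x = T_n(z) and x_0 = 0.\<close>
definition psi :: "real \<Rightarrow> nat \<Rightarrow> (nat \<Rightarrow> real) \<Rightarrow> real \<Rightarrow> real" where
  "psi a n z \<xi> = (let k = nat \<lfloor>real n * \<xi>\<rfloor> in if k = 0 then 0 else Tmap a n z k)"

definition phi :: "real \<Rightarrow> nat \<Rightarrow> (nat \<Rightarrow> real) measure \<Rightarrow> real \<Rightarrow> real" where
  "phi a n M \<xi> = (\<integral>z. psi a n z \<xi> \<partial>M)"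

definition W1 :: "real measure \<Rightarrow> real measure \<Rightarrow> ennreal" where
  "W1 \<mu> \<nu> = (SUP f \<in> {f :: real \<Rightarrow> real. 1-lipschitz_on UNIV f}.
                 ennreal \<bar>(\<integral>x. f x \<partial>\<mu>) - (\<integral>x. f x \<partial>\<nu>)\<bar>)"

text \<open>Outer probability (coincides with the probability on measurable sets).\<close>
definition outer_prob :: "'a measure \<Rightarrow> 'a set \<Rightarrow> real" where
  "outer_prob M S = Inf {measure M A | A. A \<in> sets M \<and> S \<inter> space M \<subseteq> A}"

abbreviation unit_leb :: "real measure" where
  "unit_leb \<equiv> restrict_space lborel {0..1}"

end

theory Submission
  imports Defs
begin

lemma step_repr:
  fixes h :: "nat \<Rightarrow> real" assumes n: "n \<ge> 1" and x: "x \<in> {0..1::real}"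
  shows "h (nat \<lfloor>real n * x\<rfloor>) = (\<Sum>k\<le>n. h k * indicator ({real k / n ..< real (k+1) / n} \<inter> {0..1}) x)"
proof -
  define k0 where "k0 = nat \<lfloor>real n * x\<rfloor>"
  have k0n: "k0 \<le> n"
  proof -
    have "real n * x \<le> real n" using x by (simp add: mult_left_le)
    then have "\<lfloor>real n * x\<rfloor> \<le> int n" by (metis floor_mono floor_of_nat)
    then show "k0 \<le> n" unfolding k0_def by simp
  qed
  have ind: "indicator ({real k / n ..< real (k+1) / n} \<inter> {0..1}) x = (if k = k0 then 1 else (0::real))" for k
  proof -
    have "x \<in> {real k / n ..< real (k+1) / n} \<longleftrightarrow> real k \<le> real n * x \<and> real n * x < real k + 1"
      using n by (auto simp: field_simps)
    also have "\<dots> \<longleftrightarrow> \<lfloor>real n * x\<rfloor> = int k"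
      by (simp add: floor_eq_iff)
    also have "\<dots> \<longleftrightarrow> k = k0" unfolding k0_def using x by auto
    finally show ?thesis using x by (auto simp: indicator_def)
  qed
  have "(\<Sum>k\<le>n. h k * (if k = k0 then 1 else 0)) = (\<Sum>k\<le>n. if k = k0 then h k else 0)"
    by (rule sum.cong) auto
  also have "\<dots> = h k0" using k0n by (simp add: sum.delta)
  finally show ?thesis unfolding ind by (simp add: k0_def)
qed

lemma step_integral:
  fixes h :: "nat \<Rightarrow> real" assumes n: "n \<ge> 1"
  shows "integrable unit_leb (\<lambda>x. h (nat \<lfloor>real n * x\<rfloor>))"
    and "(\<integral>x. h (nat \<lfloor>real n * x\<rfloor>) \<partial>unit_leb) = (\<Sum>k<n. h k) / n"
proof -
  define A where "A = (\<lambda>k::nat. {real k / n ..< real (k+1) / n} \<inter> {0..1::real})"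
  have sp: "space unit_leb = {0..1}" by simp
  have Aint: "A k \<inter> {0..1} = A k" for k by (auto simp: A_def)
  have setsA: "A k \<in> sets unit_leb" for k
    by (subst sets_restrict_space_iff) (auto simp: A_def)
  have fin: "emeasure unit_leb (A k) < \<infinity>" for k
  proof -
    have "emeasure unit_leb (A k) = emeasure lborel (A k)"
      by (subst emeasure_restrict_space) (auto simp: A_def)
    also have "\<dots> \<le> emeasure lborel {0..1::real}"
      by (rule emeasure_mono) (auto simp: A_def)
    finally show ?thesis by (simp add: order_le_less_trans)
  qed
  have meas: "measure unit_leb (A k) = (if k < n then 1 / n else 0)" if "k \<le> n" for k
  proof -
    have "measure unit_leb (A k) = measure lborel (A k)"
      by (subst measure_restrict_space) (auto simp: A_def)
    also have "\<dots> = (if k < n then 1 / n else 0)"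
    proof (cases "k < n")
      case True
      then have "real (k+1) / n \<le> 1" using n by (simp add: field_simps)
      moreover have k0: "0 \<le> real k / n" by simp
      ultimately have "A k = {real k / n ..< real (k+1) / n}" unfolding A_def
        by (auto intro: order_trans[OF k0])
      then show ?thesis using True n by (simp add: field_simps)
    next
      case False
      then have "k = n" using that by simp
      then have "A k = {1}" unfolding A_def using n by (auto simp: field_simps)
      then show ?thesis using False by simp
    qed
    finally show ?thesis .
  qed
  have eq: "\<And>x. x \<in> space unit_leb \<Longrightarrow> h (nat \<lfloor>real n * x\<rfloor>) = (\<Sum>k\<le>n. h k * indicator (A k) x)"
    unfolding sp A_def using step_repr[OF n] by blast
  have int2: "integrable unit_leb (\<lambda>x. \<Sum>k\<le>n. h k * indicator (A k) x)"
    using setsA fin by (intro Bochner_Integration.integrable_sum Bochner_Integration.integrable_mult_right integrable_real_indicator) auto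
  show "integrable unit_leb (\<lambda>x. h (nat \<lfloor>real n * x\<rfloor>))"
    by (rule iffD2[OF Bochner_Integration.integrable_cong[OF refl eq] int2])
  have "(\<integral>x. h (nat \<lfloor>real n * x\<rfloor>) \<partial>unit_leb) = (\<integral>x. (\<Sum>k\<le>n. h k * indicator (A k) x) \<partial>unit_leb)"
    by (rule Bochner_Integration.integral_cong[OF refl eq])
  also have "\<dots> = (\<Sum>k\<le>n. h k * measure unit_leb (A k))"
    using setsA fin by (subst Bochner_Integration.integral_sum) (auto simp: Aint Bochner_Integration.integral_indicator)
  also have "\<dots> = (\<Sum>k\<le>n. h k * (if k < n then 1 / n else 0))"
    by (rule sum.cong) (auto simp: meas)
  also have "\<dots> = (\<Sum>k<n. h k * (1 / n))"
    by (simp add: lessThan_Suc_atMost[symmetric])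
  also have "\<dots> = (\<Sum>k<n. h k) / n" by (simp add: sum_divide_distrib)
  finally show "(\<integral>x. h (nat \<lfloor>real n * x\<rfloor>) \<partial>unit_leb) = (\<Sum>k<n. h k) / n" .
qed

lemma step_meas:
  fixes g :: "nat \<Rightarrow> real"
  shows "(\<lambda>x. g (nat \<lfloor>real n * x\<rfloor>)) \<in> borel_measurable unit_leb"
proof -
  have "(\<lambda>x::real. nat \<lfloor>real n * x\<rfloor>) \<in> measurable borel (count_space UNIV)"
    by measurable
  then have "(\<lambda>x::real. nat \<lfloor>real n * x\<rfloor>) \<in> measurable unit_leb (count_space UNIV)"
    by (intro measurable_restrict_space1) simp
  then show ?thesis
    by (rule measurable_compose) simp
qed

lemma W1_step:
  fixes g1 g2 :: "nat \<Rightarrow> real" assumes n: "n \<ge> 1"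
  shows "W1 (distr unit_leb borel (\<lambda>x. g1 (nat \<lfloor>real n * x\<rfloor>)))
            (distr unit_leb borel (\<lambda>x. g2 (nat \<lfloor>real n * x\<rfloor>)))
         \<le> ennreal ((\<Sum>k<n. \<bar>g1 k - g2 k\<bar>) / n)"
  unfolding W1_def
proof (rule SUP_least)
  fix f :: "real \<Rightarrow> real" assume "f \<in> {f. 1-lipschitz_on UNIV f}"
  then have L: "1-lipschitz_on UNIV f" by simp
  then have fm: "f \<in> borel_measurable borel"
    by (intro borel_measurable_continuous_onI lipschitz_on_continuous_on)
  have i1: "(\<integral>x. f x \<partial>distr unit_leb borel (\<lambda>x. g1 (nat \<lfloor>real n * x\<rfloor>))) = (\<Sum>k<n. f (g1 k)) / n"
    using step_integral(2)[OF n, of "\<lambda>k. f (g1 k)"]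
    by (subst integral_distr[OF step_meas fm]) simp
  have i2: "(\<integral>x. f x \<partial>distr unit_leb borel (\<lambda>x. g2 (nat \<lfloor>real n * x\<rfloor>))) = (\<Sum>k<n. f (g2 k)) / n"
    using step_integral(2)[OF n, of "\<lambda>k. f (g2 k)"]
    by (subst integral_distr[OF step_meas fm]) simp
  have "\<bar>(\<Sum>k<n. f (g1 k)) / n - (\<Sum>k<n. f (g2 k)) / n\<bar> = \<bar>\<Sum>k<n. f (g1 k) - f (g2 k)\<bar> / n"
    by (simp add: sum_subtractf diff_divide_distrib[symmetric])
  also have "\<dots> \<le> (\<Sum>k<n. \<bar>f (g1 k) - f (g2 k)\<bar>) / n"
    by (intro divide_right_mono sum_abs) simp
  also have "\<dots> \<le> (\<Sum>k<n. \<bar>g1 k - g2 k\<bar>) / n"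
  proof (intro divide_right_mono sum_mono)
    fix k
    show "\<bar>f (g1 k) - f (g2 k)\<bar> \<le> \<bar>g1 k - g2 k\<bar>"
      using lipschitz_onD[OF L, of "g1 k" "g2 k"] by (simp add: dist_real_def)
  qed simp
  finally show "ennreal \<bar>(\<integral>x. f x \<partial>distr unit_leb borel (\<lambda>x. g1 (nat \<lfloor>real n * x\<rfloor>))) -
                   (\<integral>x. f x \<partial>distr unit_leb borel (\<lambda>x. g2 (nat \<lfloor>real n * x\<rfloor>)))\<bar>
         \<le> ennreal ((\<Sum>k<n. \<bar>g1 k - g2 k\<bar>) / n)"
    unfolding i1 i2 by (rule ennreal_leI)
qed


definition good :: "(nat \<Rightarrow> real) measure \<Rightarrow> nat \<Rightarrow> bool" where
  "good M n \<longleftrightarrow> prob_space M \<and> sets M = sets (PiM {1..n} (\<lambda>_. borel)) \<and> (AE z in M. z \<in> simplex1 n)"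

lemma good_meas:
  assumes "good M n" shows "(\<lambda>z. z i) \<in> borel_measurable M"
proof -
  have "(\<lambda>z. z i) \<in> borel_measurable (PiM {1..n} (\<lambda>_. borel :: real measure))"
  proof cases
    assume "i \<in> {1..n}" then show ?thesis by (rule measurable_component_singleton)
  next
    assume i: "i \<notin> {1..n}"
    then have "\<And>z. z \<in> space (PiM {1..n} (\<lambda>_. borel :: real measure)) \<Longrightarrow> z i = undefined"
      by (auto simp: space_PiM PiE_def extensional_def)
    then show ?thesis by (subst measurable_cong[where g = "\<lambda>_. undefined"]) auto
  qed
  then show ?thesis using assms unfolding good_def
    by (subst measurable_cong_sets[OF _ refl]) auto
qed

lemma good_prob: "good M n \<Longrightarrow> prob_space M" by (simp add: good_def)

lemma good_AE:
  assumes "good M n" shows "AE z in M. \<forall>i\<in>{1..n}. 0 \<le> z i \<and> z i \<le> 1"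
proof -
  have "AE z in M. z \<in> simplex1 n" using assms by (simp add: good_def)
  then show ?thesis
  proof (rule AE_mp, intro AE_I2 impI ballI)
    fix z i assume z: "z \<in> simplex1 n" and i: "i \<in> {1..n}"
    then have nn: "\<forall>j\<in>{1..n}. 0 \<le> z j" and s: "(\<Sum>j=1..n. z j) = 1" by (auto simp: simplex1_def)
    have "z i \<le> (\<Sum>j=1..n. z j)" using nn i by (intro member_le_sum) auto
    then show "0 \<le> z i \<and> z i \<le> 1" using nn i s by auto
  qed
qed

lemma good_int:
  fixes f :: "(nat \<Rightarrow> real) \<Rightarrow> real"
  assumes "good M n" "f \<in> borel_measurable M" "AE z in M. \<bar>f z\<bar> \<le> B"
  shows "integrable M f"
proof -
  interpret prob_space M using assms good_prob by blast
  show ?thesis using assms(2,3) by (intro integrable_const_bound[where B=B]) auto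
qed

lemma good_int_comp:
  assumes "good M n" "i \<in> {1..n}" shows "integrable M (\<lambda>z. z i)"
  using good_AE[OF assms(1)] assms
  by (intro good_int[OF assms(1) good_meas[OF assms(1)], where B=1]) (auto elim!: AE_mp)

lemma good_mean:
  assumes "good M n" "i \<in> {1..n}" shows "0 \<le> mean_coord M i" "mean_coord M i \<le> 1"
    and "(\<integral>z. \<bar>z i\<bar> \<partial>M) = mean_coord M i"
proof -
  interpret prob_space M using assms good_prob by blast
  have ae: "AE z in M. 0 \<le> z i \<and> z i \<le> 1" using good_AE[OF assms(1)] assms(2) by (auto elim!: AE_mp)
  show "0 \<le> mean_coord M i" unfolding mean_coord_def using ae by (intro integral_nonneg_AE) auto
  have "mean_coord M i \<le> (\<integral>z. 1 \<partial>M)" unfolding mean_coord_def using ae good_int_comp[OF assms]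
    by (intro integral_mono_AE) auto
  then show "mean_coord M i \<le> 1" using prob_space by simp
  show "(\<integral>z. \<bar>z i\<bar> \<partial>M) = mean_coord M i" unfolding mean_coord_def using ae
    using good_meas[OF assms(1), of i] by (intro integral_cong_AE) (auto elim!: AE_mp)
qed

lemma good_sum_mean:
  assumes "good M n" shows "(\<Sum>i=1..n. mean_coord M i) = 1"
proof -
  interpret prob_space M using assms good_prob by blast
  have "(\<Sum>i=1..n. mean_coord M i) = (\<integral>z. (\<Sum>i=1..n. z i) \<partial>M)"
    unfolding mean_coord_def using good_int_comp[OF assms]
    by (subst Bochner_Integration.integral_sum) auto
  also have "\<dots> = (\<integral>z. 1 \<partial>M)"
    using assms unfolding good_def simplex1_def
    by (intro integral_cong_AE) (auto intro!: borel_measurable_sum good_meas[OF assms] elim!: AE_mp)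
  finally show ?thesis using prob_space by simp
qed

lemma good_int_prod:
  assumes g: "good M n" and i: "i \<in> {1..n}" and j: "j \<in> {1..n}"
  shows "integrable M (\<lambda>z. (z i - mean_coord M i) * (z j - mean_coord M j))"
proof (rule good_int[OF g, where B=1])
  show "(\<lambda>z. (z i - mean_coord M i) * (z j - mean_coord M j)) \<in> borel_measurable M"
    using good_meas[OF g, of i] good_meas[OF g, of j] by measurable
  have mi: "0 \<le> mean_coord M i" "mean_coord M i \<le> 1" using good_mean[OF g i] by auto
  have mj: "0 \<le> mean_coord M j" "mean_coord M j \<le> 1" using good_mean[OF g j] by auto
  show "AE z in M. \<bar>(z i - mean_coord M i) * (z j - mean_coord M j)\<bar> \<le> 1"
    using good_AE[OF g]
  proof (rule AE_mp, intro AE_I2 impI)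
    fix z :: "nat \<Rightarrow> real" assume "\<forall>i\<in>{1..n}. 0 \<le> z i \<and> z i \<le> 1"
    then have zi: "0 \<le> z i" "z i \<le> 1" and zj: "0 \<le> z j" "z j \<le> 1" using i j by auto
    have a: "\<bar>z i - mean_coord M i\<bar> \<le> 1" using zi mi by auto
    have b: "\<bar>z j - mean_coord M j\<bar> \<le> 1" using zj mj by auto
    show "\<bar>(z i - mean_coord M i) * (z j - mean_coord M j)\<bar> \<le> 1"
      unfolding abs_mult using mult_mono[OF a b] by simp
  qed
qed

lemma good_sq_sum:
  assumes g: "good M n" and S: "S \<subseteq> {1..n}"
  shows "integrable M (\<lambda>z. (\<Sum>i\<in>S. c i * (z i - mean_coord M i))\<^sup>2)"
    and "(\<integral>z. (\<Sum>i\<in>S. c i * (z i - mean_coord M i))\<^sup>2 \<partial>M) = (\<Sum>i\<in>S. \<Sum>j\<in>S. c i * c j * cov_coord M i j)"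
proof -
  have fS: "finite S" using S finite_subset by blast
  have eq: "(\<Sum>i\<in>S. c i * (z i - mean_coord M i))\<^sup>2 = (\<Sum>i\<in>S. \<Sum>j\<in>S. (c i * c j) * ((z i - mean_coord M i) * (z j - mean_coord M j)))" for z
    unfolding power2_eq_square sum_product by (simp add: ac_simps)
  have int: "integrable M (\<lambda>z. (c i * c j) * ((z i - mean_coord M i) * (z j - mean_coord M j)))" if "i \<in> S" "j \<in> S" for i j
    by (intro Bochner_Integration.integrable_mult_right good_int_prod[OF g]) (use that S in auto)
  show "integrable M (\<lambda>z. (\<Sum>i\<in>S. c i * (z i - mean_coord M i))\<^sup>2)"
    unfolding eq using int by (intro Bochner_Integration.integrable_sum) auto
  show "(\<integral>z. (\<Sum>i\<in>S. c i * (z i - mean_coord M i))\<^sup>2 \<partial>M) = (\<Sum>i\<in>S. \<Sum>j\<in>S. c i * c j * cov_coord M i j)"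
    unfolding eq cov_coord_def using int
    by (subst Bochner_Integration.integral_sum, (auto intro!: Bochner_Integration.integrable_sum)[1],
        intro sum.cong refl, subst Bochner_Integration.integral_sum, auto)
qed

lemma cov_diag: "cov_coord M i i = var_coord M i"
  unfolding cov_coord_def var_coord_def by (simp add: power2_eq_square)

lemma var_nonneg: "0 \<le> var_coord M i"
  unfolding var_coord_def by (intro integral_nonneg_AE AE_I2) simp

lemma var_bound:
  assumes g: "good M n" and n1: "n \<ge> 1" and S: "S \<subseteq> {1..n}" and K: "K \<ge> 0" and L: "L \<ge> 0"
    and cb: "\<And>i. i \<in> S \<Longrightarrow> \<bar>c i\<bar> \<le> L"
    and vb: "\<And>j. j \<in> S \<Longrightarrow> var_coord M j \<le> K / n"
    and covb: "\<And>j k. j \<in> S \<Longrightarrow> k \<in> S \<Longrightarrow> j \<noteq> k \<Longrightarrow> \<bar>cov_coord M j k\<bar> \<le> K / (real n)\<^sup>2"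
  shows "(\<integral>z. (\<Sum>i\<in>S. c i * (z i - mean_coord M i))\<^sup>2 \<partial>M) \<le> 2 * K * L\<^sup>2"
proof -
  have fS: "finite S" using S finite_subset by blast
  have cardS: "real (card S) \<le> n" using card_mono[OF _ S] by simp
  have "(\<integral>z. (\<Sum>i\<in>S. c i * (z i - mean_coord M i))\<^sup>2 \<partial>M) = (\<Sum>i\<in>S. \<Sum>j\<in>S. c i * c j * cov_coord M i j)"
    by (rule good_sq_sum(2)[OF g S])
  also have "\<dots> \<le> (\<Sum>i\<in>S. \<Sum>j\<in>S. L\<^sup>2 * ((if i = j then K / n else 0) + K / (real n)\<^sup>2))"
  proof (intro sum_mono)
    fix i j assume i: "i \<in> S" and j: "j \<in> S"
    have cv: "\<bar>cov_coord M i j\<bar> \<le> (if i = j then K / n else 0) + K / (real n)\<^sup>2"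
    proof (cases "i = j")
      case True
      have "0 \<le> K / (real n)\<^sup>2" using K by simp
      then show ?thesis using True vb[OF i] var_nonneg[of M i] by (simp add: cov_diag)
    next
      case False
      then show ?thesis using covb[OF i j] by simp
    qed
    have "c i * c j * cov_coord M i j \<le> \<bar>c i\<bar> * \<bar>c j\<bar> * \<bar>cov_coord M i j\<bar>"
      by (metis abs_ge_self abs_mult)
    also have "\<dots> \<le> L * L * ((if i = j then K / n else 0) + K / (real n)\<^sup>2)"
      using cb[OF i] cb[OF j] cv by (intro mult_mono) (auto intro: mult_mono)
    finally show "c i * c j * cov_coord M i j \<le> L\<^sup>2 * ((if i = j then K / n else 0) + K / (real n)\<^sup>2)"
      by (simp add: power2_eq_square)
  qed
  also have "\<dots> = L\<^sup>2 * (real (card S) * (K / n) + (real (card S))\<^sup>2 * (K / (real n)\<^sup>2))"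
    using fS by (simp add: sum.distrib sum_distrib_left[symmetric] sum.delta power2_eq_square algebra_simps)
  also have "\<dots> \<le> L\<^sup>2 * (real n * (K / n) + (real n)\<^sup>2 * (K / (real n)\<^sup>2))"
    using cardS K by (intro mult_left_mono add_mono mult_right_mono power_mono) auto
  also have "\<dots> = 2 * K * L\<^sup>2" using n1 by (simp add: field_simps)
  finally show ?thesis .
qed

lemma good_int_lin:
  assumes g: "good M n" and S: "S \<subseteq> {1..n}"
  shows "integrable M (\<lambda>z. \<Sum>i\<in>S. c i * (z i - mean_coord M i))"
proof -
  interpret prob_space M using g good_prob by blast
  show ?thesis using S good_int_comp[OF g]
  by (intro Bochner_Integration.integrable_sum Bochner_Integration.integrable_mult_right
        Bochner_Integration.integrable_diff) auto
qed

lemma abs_sq_bound: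
  assumes g: "good M n" and S: "S \<subseteq> {1..n}" and eta: "\<eta> > 0"
  shows "(\<integral>z. \<bar>\<Sum>i\<in>S. c i * (z i - mean_coord M i)\<bar> \<partial>M)
         \<le> ((\<integral>z. (\<Sum>i\<in>S. c i * (z i - mean_coord M i))\<^sup>2 \<partial>M) / \<eta> + \<eta>) / 2"
proof -
  interpret prob_space M using g good_prob by blast
  have i1: "integrable M (\<lambda>z. \<bar>\<Sum>i\<in>S. c i * (z i - mean_coord M i)\<bar>)"
    using good_int_lin[OF g S] by (rule integrable_abs)
  have i2: "integrable M (\<lambda>z. ((\<Sum>i\<in>S. c i * (z i - mean_coord M i))\<^sup>2 / \<eta> + \<eta>) / 2)"
    using good_sq_sum(1)[OF g S] by (intro Bochner_Integration.integrable_add Bochner_Integration.integrable_divide) auto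
  have pt: "\<bar>t\<bar> \<le> (t\<^sup>2 / \<eta> + \<eta>) / 2" for t :: real
  proof -
    have "0 \<le> (\<bar>t\<bar> - \<eta>)\<^sup>2" by simp
    then have "2 * \<eta> * \<bar>t\<bar> \<le> t\<^sup>2 + \<eta>\<^sup>2" by (simp add: power2_eq_square algebra_simps)
    then show ?thesis using eta by (simp add: field_simps power2_eq_square)
  qed
  have "(\<integral>z. \<bar>\<Sum>i\<in>S. c i * (z i - mean_coord M i)\<bar> \<partial>M)
     \<le> (\<integral>z. ((\<Sum>i\<in>S. c i * (z i - mean_coord M i))\<^sup>2 / \<eta> + \<eta>) / 2 \<partial>M)"
    using i1 i2 pt by (intro integral_mono) auto
  also have "\<dots> = ((\<integral>z. (\<Sum>i\<in>S. c i * (z i - mean_coord M i))\<^sup>2 \<partial>M) / \<eta> + \<eta>) / 2"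
    using good_sq_sum(1)[OF g S] prob_space by simp
  finally show ?thesis .
qed

lemma Tmap_lin:
  "Tmap a n z k = (\<Sum>i=1..k. (real n * (1 - a / 2) * (1 / (real n + 1 - real i))) * z i) + (real k - 1) / (real n - 1) * a"
  unfolding Tmap_def by (simp add: sum_distrib_left mult_ac)

lemma per_k:
  fixes c :: "nat \<Rightarrow> real" and d :: real and J :: "nat set"
  assumes g: "good M n" and k: "k \<le> n" and cpos: "\<And>i. i \<in> {1..k} \<Longrightarrow> c i \<ge> 0"
  shows "integrable M (\<lambda>z. (\<Sum>i=1..k. c i * z i) + d)"
    and "(\<integral>z. \<bar>((\<Sum>i=1..k. c i * z i) + d) - (\<integral>z. (\<Sum>i=1..k. c i * z i) + d \<partial>M)\<bar> \<partial>M)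
         \<le> (\<integral>z. \<bar>\<Sum>i\<in>{1..k} \<inter> J. c i * (z i - mean_coord M i)\<bar> \<partial>M)
            + 2 * (\<Sum>i\<in>{1..k} - J. c i * mean_coord M i)"
proof -
  interpret prob_space M using g good_prob by blast
  have kn: "{1..k} \<subseteq> {1..n}" using k by auto
  have ic: "integrable M (\<lambda>z. z i)" if "i \<in> {1..k}" for i using good_int_comp[OF g] kn that by auto
  have iT: "integrable M (\<lambda>z. (\<Sum>i=1..k. c i * z i))"
    using ic by (intro Bochner_Integration.integrable_sum Bochner_Integration.integrable_mult_right) auto
  show "integrable M (\<lambda>z. (\<Sum>i=1..k. c i * z i) + d)" using iT by simp
  have E: "(\<integral>z. (\<Sum>i=1..k. c i * z i) + d \<partial>M) = (\<Sum>i=1..k. c i * mean_coord M i) + d"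
    using iT ic prob_space unfolding mean_coord_def
    by (subst Bochner_Integration.integral_add) (auto simp: Bochner_Integration.integral_sum)
  have split: "(\<Sum>i=1..k. c i * (z i - mean_coord M i)) = (\<Sum>i\<in>{1..k} \<inter> J. c i * (z i - mean_coord M i)) + (\<Sum>i\<in>{1..k} - J. c i * (z i - mean_coord M i))" for z :: "nat \<Rightarrow> real"
    by (rule sum.Int_Diff) simp
  have pt: "\<bar>((\<Sum>i=1..k. c i * z i) + d) - ((\<Sum>i=1..k. c i * mean_coord M i) + d)\<bar>
      \<le> \<bar>\<Sum>i\<in>{1..k} \<inter> J. c i * (z i - mean_coord M i)\<bar> + (\<Sum>i\<in>{1..k} - J. c i * (\<bar>z i\<bar> + mean_coord M i))" for z :: "nat \<Rightarrow> real"
  proof -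
    have "((\<Sum>i=1..k. c i * z i) + d) - ((\<Sum>i=1..k. c i * mean_coord M i) + d) = (\<Sum>i=1..k. c i * (z i - mean_coord M i))"
      by (simp add: sum_subtractf right_diff_distrib)
    also have "\<dots> = (\<Sum>i\<in>{1..k} \<inter> J. c i * (z i - mean_coord M i)) + (\<Sum>i\<in>{1..k} - J. c i * (z i - mean_coord M i))"
      by (rule split)
    finally have "\<bar>((\<Sum>i=1..k. c i * z i) + d) - ((\<Sum>i=1..k. c i * mean_coord M i) + d)\<bar>
        \<le> \<bar>\<Sum>i\<in>{1..k} \<inter> J. c i * (z i - mean_coord M i)\<bar> + \<bar>\<Sum>i\<in>{1..k} - J. c i * (z i - mean_coord M i)\<bar>"
      by simp
    also have "\<bar>\<Sum>i\<in>{1..k} - J. c i * (z i - mean_coord M i)\<bar> \<le> (\<Sum>i\<in>{1..k} - J. \<bar>c i * (z i - mean_coord M i)\<bar>)"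
      by (rule sum_abs)
    also have "\<dots> \<le> (\<Sum>i\<in>{1..k} - J. c i * (\<bar>z i\<bar> + mean_coord M i))"
    proof (rule sum_mono)
      fix i assume i: "i \<in> {1..k} - J"
      then have "0 \<le> c i" "0 \<le> mean_coord M i" using cpos good_mean(1)[OF g] kn by auto
      then show "\<bar>c i * (z i - mean_coord M i)\<bar> \<le> c i * (\<bar>z i\<bar> + mean_coord M i)"
        by (simp add: abs_mult mult_left_mono)
    qed
    finally show ?thesis by simp
  qed
  have iR: "integrable M (\<lambda>z. (\<Sum>i\<in>{1..k} - J. c i * (\<bar>z i\<bar> + mean_coord M i)))"
    using ic by (intro Bochner_Integration.integrable_sum Bochner_Integration.integrable_mult_right
        Bochner_Integration.integrable_add integrable_abs) auto
  have iS: "integrable M (\<lambda>z. \<bar>\<Sum>i\<in>{1..k} \<inter> J. c i * (z i - mean_coord M i)\<bar>)"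
  proof -
    have "{1..k} \<inter> J \<subseteq> {1..n}" using kn by blast
    from good_int_lin[OF g this, of c] show ?thesis by (rule integrable_abs)
  qed
  have "(\<integral>z. \<bar>((\<Sum>i=1..k. c i * z i) + d) - (\<integral>z. (\<Sum>i=1..k. c i * z i) + d \<partial>M)\<bar> \<partial>M)
     \<le> (\<integral>z. \<bar>\<Sum>i\<in>{1..k} \<inter> J. c i * (z i - mean_coord M i)\<bar> + (\<Sum>i\<in>{1..k} - J. c i * (\<bar>z i\<bar> + mean_coord M i)) \<partial>M)"
    unfolding E
  proof (rule integral_mono)
    show "integrable M (\<lambda>z. \<bar>((\<Sum>i=1..k. c i * z i) + d) - ((\<Sum>i=1..k. c i * mean_coord M i) + d)\<bar>)"
      using iT by (intro integrable_abs Bochner_Integration.integrable_diff) auto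
    show "integrable M (\<lambda>z. \<bar>\<Sum>i\<in>{1..k} \<inter> J. c i * (z i - mean_coord M i)\<bar> + (\<Sum>i\<in>{1..k} - J. c i * (\<bar>z i\<bar> + mean_coord M i)))"
      using iS iR by (rule Bochner_Integration.integrable_add)
  qed (rule pt)
  also have "\<dots> = (\<integral>z. \<bar>\<Sum>i\<in>{1..k} \<inter> J. c i * (z i - mean_coord M i)\<bar> \<partial>M)
        + (\<Sum>i\<in>{1..k} - J. c i * ((\<integral>z. \<bar>z i\<bar> \<partial>M) + mean_coord M i))"
    using iS iR ic prob_space
    by (simp add: Bochner_Integration.integral_sum Bochner_Integration.integral_add integrable_abs)
  also have "\<dots> = (\<integral>z. \<bar>\<Sum>i\<in>{1..k} \<inter> J. c i * (z i - mean_coord M i)\<bar> \<partial>M)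
        + 2 * (\<Sum>i\<in>{1..k} - J. c i * mean_coord M i)"
    using good_mean(3)[OF g] kn by (simp add: sum_distrib_left subset_iff mult_ac)
  finally show "(\<integral>z. \<bar>((\<Sum>i=1..k. c i * z i) + d) - (\<integral>z. (\<Sum>i=1..k. c i * z i) + d \<partial>M)\<bar> \<partial>M)
         \<le> (\<integral>z. \<bar>\<Sum>i\<in>{1..k} \<inter> J. c i * (z i - mean_coord M i)\<bar> \<partial>M)
            + 2 * (\<Sum>i\<in>{1..k} - J. c i * mean_coord M i)" .
qed

lemma swap_sum:
  fixes f :: "nat \<Rightarrow> real"
  shows "(\<Sum>k=1..m. \<Sum>i=1..k. f i) = (\<Sum>i=1..m. real (m + 1 - i) * f i)"
proof (induction m)
  case 0 then show ?case by simp
next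
  case (Suc m)
  have "(\<Sum>k=1..Suc m. \<Sum>i=1..k. f i) = (\<Sum>i=1..m. real (m + 1 - i) * f i) + (\<Sum>i=1..Suc m. f i)"
    using Suc by simp
  also have "\<dots> = (\<Sum>i=1..m. real (m + 1 - i) * f i + f i) + f (Suc m)"
    by (simp add: sum.distrib)
  also have "(\<Sum>i=1..m. real (m + 1 - i) * f i + f i) = (\<Sum>i=1..m. real (Suc m + 1 - i) * f i)"
    by (intro sum.cong refl) (auto simp: of_nat_diff algebra_simps)
  finally show ?case by simp
qed

definition Jset :: "nat \<Rightarrow> real \<Rightarrow> nat set" where
  "Jset n \<xi> = {i\<in>{1..n}. real i < real n * \<xi>}"

lemma core:
  assumes g: "good M n" and n2: "n \<ge> 2" and a: "0 < a" "a < 2" and xi: "0 < \<xi>" "\<xi> < 1"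
    and eta: "\<eta> > 0" and K: "K \<ge> 0"
    and vb: "\<And>j. j \<in> Jset n \<xi> \<Longrightarrow> var_coord M j \<le> K / n"
    and covb: "\<And>j k. j \<in> Jset n \<xi> \<Longrightarrow> k \<in> Jset n \<xi> \<Longrightarrow> j \<noteq> k \<Longrightarrow> \<bar>cov_coord M j k\<bar> \<le> K / (real n)\<^sup>2"
  defines "G \<equiv> \<lambda>z k. if k = 0 then 0 else Tmap a n z k"
  shows "integrable M (\<lambda>z. (\<Sum>k<n. \<bar>G z k - (\<integral>z. G z k \<partial>M)\<bar>) / n)"
    and "(\<integral>z. (\<Sum>k<n. \<bar>G z k - (\<integral>z. G z k \<partial>M)\<bar>) / n \<partial>M)
         \<le> (2 * K * (1 / (1 - \<xi>))\<^sup>2 / \<eta> + \<eta>) / 2 + 2 * (1 - (\<Sum>i\<in>Jset n \<xi>. mean_coord M i))"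
proof -
  interpret prob_space M using g good_prob by blast
  define b where "b = real n * (1 - a / 2)"
  define c where "c = (\<lambda>i. b * (1 / (real n + 1 - real i)))"
  define d where "d = (\<lambda>k. (real k - 1) / (real n - 1) * a)"
  define J where "J = Jset n \<xi>"
  define L where "L = 1 / (1 - \<xi>)"
  define Vb where "Vb = (2 * K * L\<^sup>2 / \<eta> + \<eta>) / 2"
  define T where "T = (\<lambda>k. \<Sum>i\<in>{1..k} - J. c i * mean_coord M i)"
  have b0: "0 \<le> b" "b \<le> real n" using a unfolding b_def by (auto intro: mult_left_le)
  have Jsub: "J \<subseteq> {1..n}" unfolding J_def Jset_def by auto
  have cpos: "c i \<ge> 0" if "i \<le> n" for i using that b0 unfolding c_def by auto
  have cL: "\<bar>c i\<bar> \<le> L" if "i \<in> J" for i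
  proof -
    have i: "real i < real n * \<xi>" "i \<le> n" using that unfolding J_def Jset_def by auto
    have pos: "real n * (1 - \<xi>) < real n + 1 - real i" using i by (simp add: algebra_simps)
    have npos: "0 < real n * (1 - \<xi>)" using n2 xi by simp
    have "c i = b / (real n + 1 - real i)" unfolding c_def by simp
    also have "\<dots> \<le> real n / (real n * (1 - \<xi>))"
      using b0 pos npos by (intro frac_le) auto
    also have "\<dots> = L" unfolding L_def using n2 by simp
    finally show ?thesis using cpos[OF i(2)] by simp
  qed
  have Geq: "G z k = (\<Sum>i=1..k. c i * z i) + d k" if "k \<ge> 1" for z k
    using that unfolding G_def c_def d_def b_def by (simp add: Tmap_lin)
  have termk: "integrable M (\<lambda>z. \<bar>G z k - (\<integral>z. G z k \<partial>M)\<bar>)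
      \<and> (\<integral>z. \<bar>G z k - (\<integral>z. G z k \<partial>M)\<bar> \<partial>M) \<le> Vb + 2 * T k" if k: "k \<in> {1..<n}" for k
  proof -
    have kn: "k \<le> n" using k by simp
    have Gk: "G z k = (\<Sum>i=1..k. c i * z i) + d k" for z using Geq k by simp
    have cp: "\<And>i. i \<in> {1..k} \<Longrightarrow> c i \<ge> 0" using cpos kn by auto
    note pk = per_k(1)[where c=c and d="d k", OF g kn cp] per_k(2)[where c=c and d="d k" and J=J, OF g kn cp]
    have S: "{1..k} \<inter> J \<subseteq> {1..n}" using Jsub by blast
    have "(\<integral>z. \<bar>\<Sum>i\<in>{1..k} \<inter> J. c i * (z i - mean_coord M i)\<bar> \<partial>M)
       \<le> ((\<integral>z. (\<Sum>i\<in>{1..k} \<inter> J. c i * (z i - mean_coord M i))\<^sup>2 \<partial>M) / \<eta> + \<eta>) / 2"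
      by (rule abs_sq_bound[OF g S eta])
    also have "\<dots> \<le> (2 * K * L\<^sup>2 / \<eta> + \<eta>) / 2"
    proof -
      have "(\<integral>z. (\<Sum>i\<in>{1..k} \<inter> J. c i * (z i - mean_coord M i))\<^sup>2 \<partial>M) \<le> 2 * K * L\<^sup>2"
      proof (rule var_bound[OF g _ S K])
        show "L \<ge> 0" unfolding L_def using xi by simp
      qed (use n2 cL vb covb in \<open>auto simp: J_def\<close>)
      then show ?thesis using eta by (simp add: divide_right_mono)
    qed
    finally have "(\<integral>z. \<bar>\<Sum>i\<in>{1..k} \<inter> J. c i * (z i - mean_coord M i)\<bar> \<partial>M) \<le> Vb"
      unfolding Vb_def .
    then show ?thesis using pk unfolding Gk T_def
      by (auto intro!: integrable_abs Bochner_Integration.integrable_diff)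
  qed
  have int0: "integrable M (\<lambda>z. \<bar>G z k - (\<integral>z. G z k \<partial>M)\<bar>)" if "k < n" for k
  proof (cases "k = 0")
    case True then show ?thesis unfolding G_def by simp
  next
    case False then show ?thesis using termk[of k] that by auto
  qed
  show "integrable M (\<lambda>z. (\<Sum>k<n. \<bar>G z k - (\<integral>z. G z k \<partial>M)\<bar>) / n)"
    using int0 by (intro Bochner_Integration.integrable_divide Bochner_Integration.integrable_sum) auto
  have "(\<integral>z. (\<Sum>k<n. \<bar>G z k - (\<integral>z. G z k \<partial>M)\<bar>) / n \<partial>M)
      = (\<Sum>k<n. (\<integral>z. \<bar>G z k - (\<integral>z. G z k \<partial>M)\<bar> \<partial>M)) / n"
    using int0 by (simp add: Bochner_Integration.integral_sum)
  also have "(\<Sum>k<n. (\<integral>z. \<bar>G z k - (\<integral>z. G z k \<partial>M)\<bar> \<partial>M))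
      = (\<Sum>k\<in>{1..<n}. (\<integral>z. \<bar>G z k - (\<integral>z. G z k \<partial>M)\<bar> \<partial>M))"
  proof -
    have "{..<n} = insert 0 {1..<n}" using n2 by auto
    then show ?thesis by (simp add: G_def)
  qed
  also have "\<dots> \<le> (\<Sum>k\<in>{1..<n}. Vb + 2 * T k)"
    using termk by (intro sum_mono) auto
  also have "\<dots> = real (n - 1) * Vb + 2 * (\<Sum>k=1..n-1. T k)"
  proof -
    have "{1..<n} = {1..n-1}" using n2 by auto
    then show ?thesis by (simp add: sum.distrib sum_distrib_left)
  qed
  finally have E1: "(\<integral>z. (\<Sum>k<n. \<bar>G z k - (\<integral>z. G z k \<partial>M)\<bar>) / n \<partial>M)
      \<le> (real (n - 1) * Vb + 2 * (\<Sum>k=1..n-1. T k)) / n"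
    using n2 by (simp add: divide_right_mono)
  define f where "f = (\<lambda>i. if i \<in> J then 0 else c i * mean_coord M i)"
  have Tf: "T k = (\<Sum>i=1..k. f i)" for k
  proof -
    have "T k = (\<Sum>i\<in>{1..k} \<inter> -J. c i * mean_coord M i)" by (simp add: T_def Diff_eq)
    also have "\<dots> = (\<Sum>i\<in>{1..k}. if i \<in> -J then c i * mean_coord M i else 0)"
      by (rule sum.inter_restrict) simp
    also have "\<dots> = (\<Sum>i=1..k. f i)" by (rule sum.cong) (auto simp: f_def)
    finally show ?thesis .
  qed
  have "(\<Sum>k=1..n-1. T k) = (\<Sum>i=1..n-1. real (n - 1 + 1 - i) * f i)"
    unfolding Tf by (rule swap_sum)
  also have "\<dots> \<le> (\<Sum>i=1..n-1. real n * (if i \<in> J then 0 else mean_coord M i))"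
  proof (intro sum_mono)
    fix i assume i: "i \<in> {1..n-1}"
    have m0: "0 \<le> mean_coord M i" using good_mean(1)[OF g] i by auto
    have "real (n - 1 + 1 - i) * c i \<le> real n"
    proof -
      have "i \<le> n" using i by auto
      then have e: "real (n - 1 + 1 - i) = real n - real i" using n2 by (simp add: of_nat_diff)
      have p: "0 < real n + 1 - real i" using \<open>i \<le> n\<close> by simp
      have "(real n - real i) * c i = b * ((real n - real i) / (real n + 1 - real i))"
        unfolding c_def by simp
      also have "\<dots> \<le> b * 1" using b0 p i by (intro mult_left_mono) auto
      finally show ?thesis using e b0 by simp
    qed
    then show "real (n - 1 + 1 - i) * f i \<le> real n * (if i \<in> J then 0 else mean_coord M i)"
      unfolding f_def using m0 by (auto simp: mult.assoc[symmetric] intro: mult_right_mono)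
  qed
  also have "\<dots> \<le> real n * (\<Sum>i=1..n. (if i \<in> J then 0 else mean_coord M i))"
    unfolding sum_distrib_left[symmetric]
    using good_mean(1)[OF g] by (intro mult_left_mono sum_mono2) auto
  also have "(\<Sum>i=1..n. (if i \<in> J then 0 else mean_coord M i)) = 1 - (\<Sum>i\<in>J. mean_coord M i)"
  proof -
    have "(\<Sum>i\<in>{1..n} - J. mean_coord M i) = (\<Sum>i\<in>{1..n} \<inter> -J. mean_coord M i)" by (simp add: Diff_eq)
    also have "\<dots> = (\<Sum>i\<in>{1..n}. if i \<in> -J then mean_coord M i else 0)"
      by (rule sum.inter_restrict) simp
    also have "\<dots> = (\<Sum>i=1..n. (if i \<in> J then 0 else mean_coord M i))"
      by (rule sum.cong) auto
    finally have "(\<Sum>i=1..n. (if i \<in> J then 0 else mean_coord M i)) = (\<Sum>i\<in>{1..n} - J. mean_coord M i)"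
      by simp
    also have "\<dots> = (\<Sum>i=1..n. mean_coord M i) - (\<Sum>i\<in>J. mean_coord M i)"
      using Jsub by (simp add: sum_diff)
    finally show ?thesis using good_sum_mean[OF g] by simp
  qed
  finally have E2: "(\<Sum>k=1..n-1. T k) \<le> real n * (1 - (\<Sum>i\<in>J. mean_coord M i))" .
  have Vb0: "0 \<le> Vb" unfolding Vb_def using K eta by simp
  have "(real (n - 1) * Vb + 2 * (\<Sum>k=1..n-1. T k)) / n \<le> (real n * Vb + 2 * (real n * (1 - (\<Sum>i\<in>J. mean_coord M i)))) / n"
    using n2 Vb0 E2 by (intro divide_right_mono add_mono mult_right_mono) auto
  also have "\<dots> = Vb + 2 * (1 - (\<Sum>i\<in>J. mean_coord M i))" using n2 by (simp add: field_simps)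
  finally show "(\<integral>z. (\<Sum>k<n. \<bar>G z k - (\<integral>z. G z k \<partial>M)\<bar>) / n \<partial>M)
         \<le> (2 * K * (1 / (1 - \<xi>))\<^sup>2 / \<eta> + \<eta>) / 2 + 2 * (1 - (\<Sum>i\<in>Jset n \<xi>. mean_coord M i))"
    using E1 unfolding Vb_def L_def J_def by linarith
qed


lemma int_split:
  fixes f :: "real \<Rightarrow> real"
  assumes f: "f integrable_on {0..1}" and n: "n \<ge> 1"
  shows "q \<le> n \<Longrightarrow> integral {0..real q / n} f = (\<Sum>i<q. integral {real i / n..real (i+1) / n} f)"
proof (induction q)
  case 0 then show ?case by simp
next
  case (Suc q)
  have le: "real (Suc q) / n \<le> 1" using Suc.prems n by (simp add: field_simps)
  have "integral {0..real q / n} f + integral {real q / n..real (Suc q) / n} f = integral {0..real (Suc q) / n} f"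
  proof (rule Henstock_Kurzweil_Integration.integral_combine)
    show "f integrable_on {0..real (Suc q) / n}"
      by (rule integrable_subinterval_real[OF f]) (use le in auto)
  qed (auto simp: divide_right_mono)
  then show ?case using Suc by simp
qed

lemma riemann:
  fixes w :: "real \<Rightarrow> real"
  assumes w0: "\<And>x. x \<in> {0..1} \<Longrightarrow> 0 \<le> w x"
    and wint: "set_integrable lborel {0..1} w"
    and w1: "(LINT x:{0..1}|lborel. w x) = 1"
    and wc: "continuous_on {0..<1} w"
    and eta: "\<eta> > 0"
  shows "\<exists>\<xi>. 0 < \<xi> \<and> \<xi> < 1 \<and> (\<exists>N. \<forall>n\<ge>N. (\<Sum>i\<in>Jset n \<xi>. w (real i / real n)) / n \<ge> 1 - \<eta>)"
proof -
  have wi: "w integrable_on {0..1}" and w1': "integral {0..1} w = 1"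
    using set_borel_integral_eq_integral[OF wint] w1 by auto
  define F where "F = (\<lambda>x. integral {0..x} w)"
  have Fc: "continuous_on {0..1} F" unfolding F_def by (rule indefinite_integral_continuous_1[OF wi])
  then obtain d where d: "d > 0" "\<And>x. x \<in> {0..1} \<Longrightarrow> dist x 1 < d \<Longrightarrow> dist (F x) (F 1) < \<eta> / 3"
    unfolding continuous_on_iff using eta by (metis atLeastAtMost_iff divide_pos_pos order_refl zero_less_numeral zero_le_one)
  define \<xi> where "\<xi> = max (1/2) (1 - d / 2)"
  have xi: "0 < \<xi>" "\<xi> < 1" unfolding \<xi>_def using d by auto
  have Fxi: "F \<xi> > 1 - \<eta> / 3"
  proof -
    have "dist (F \<xi>) (F 1) < \<eta> / 3" using xi d unfolding \<xi>_def by (intro d(2)) (auto simp: dist_real_def)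
    moreover have "F 1 = 1" using w1' by (simp add: F_def)
    ultimately have "\<bar>F \<xi> - 1\<bar> < \<eta> / 3" by (simp only: dist_real_def)
    then show ?thesis by arith
  qed
  define \<xi>2 where "\<xi>2 = (1 + \<xi>) / 2"
  have xi2: "\<xi> < \<xi>2" "\<xi>2 < 1" using xi unfolding \<xi>2_def by auto
  have "continuous_on {0..\<xi>2} w" by (rule continuous_on_subset[OF wc]) (use xi2 in auto)
  then have "uniformly_continuous_on {0..\<xi>2} w" by (intro compact_uniformly_continuous) auto
  then obtain du where du: "du > 0" "\<And>x y. x \<in> {0..\<xi>2} \<Longrightarrow> y \<in> {0..\<xi>2} \<Longrightarrow> dist y x < du \<Longrightarrow> dist (w y) (w x) < \<eta> / 3"
    unfolding uniformly_continuous_on_def using eta by (metis divide_pos_pos zero_less_numeral)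
  obtain N0 :: nat where N0: "real N0 > 1 / du + 1 / (\<xi>2 - \<xi>) + 3 * \<bar>w 0\<bar> / \<eta> + 1"
    using reals_Archimedean2 by blast
  show ?thesis
  proof (intro exI conjI allI impI)
    show "0 < \<xi>" "\<xi> < 1" by (fact xi)+
    fix n assume nN: "N0 \<le> n"
    have N0pos: "0 < real N0" using N0 du xi2 eta by (smt (verit) divide_nonneg_nonneg abs_ge_zero)
    have n1: "n \<ge> 1" "real n > 0" using nN N0pos by auto
    have nge: "real n \<ge> real N0" using nN by simp
    have inv1: "1 / real n < du"
    proof -
      have "1 / du < real n" using N0 nge du xi2 eta by (smt (verit) divide_nonneg_nonneg abs_ge_zero)
      then show ?thesis using du n1 by (simp add: field_simps)
    qed
    have inv2: "1 / real n < \<xi>2 - \<xi>"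
    proof -
      have "1 / (\<xi>2 - \<xi>) < real n" using N0 nge du xi2 eta by (smt (verit) divide_nonneg_nonneg abs_ge_zero)
      then show ?thesis using xi2 n1 by (simp add: field_simps)
    qed
    have inv3: "\<bar>w 0\<bar> / real n \<le> \<eta> / 3"
    proof -
      have "3 * \<bar>w 0\<bar> / \<eta> < real n" using N0 nge du xi2 eta by (smt (verit) divide_nonneg_nonneg abs_ge_zero)
      then show ?thesis using eta n1 by (simp add: field_simps)
    qed
    define q where "q = nat \<lceil>real n * \<xi>\<rceil>"
    have qc: "real q = of_int \<lceil>real n * \<xi>\<rceil>" unfolding q_def using xi n1
      by (simp add: ceiling_correct order_trans[OF _ le_of_int_ceiling])
    have q1: "real q - 1 < real n * \<xi>" "real n * \<xi> \<le> real q" using ceiling_correct[of "real n * \<xi>"] qc by auto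
    have qn: "q \<le> n"
    proof -
      have "real n * \<xi> \<le> real n" using xi n1 by simp
      then have "\<lceil>real n * \<xi>\<rceil> \<le> int n" by (simp add: ceiling_le_iff)
      then show ?thesis unfolding q_def by (metis nat_int nat_mono)
    qed
    have qxi2: "real q / n \<le> \<xi>2"
    proof -
      have "real q < real n * \<xi> + 1" using q1 by simp
      then have "real q / n < \<xi> + 1 / n" using n1 by (simp add: field_simps)
      then show ?thesis using inv2 by simp
    qed
    have J: "Jset n \<xi> = {1..<q}"
    proof (intro set_eqI iffI)
      fix i assume "i \<in> Jset n \<xi>"
      then have "i \<ge> 1" "real i < real n * \<xi>" by (auto simp: Jset_def)
      then show "i \<in> {1..<q}" using q1 by auto
    next
      fix i assume i: "i \<in> {1..<q}"
      then have "real i \<le> real q - 1" by auto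
      then show "i \<in> Jset n \<xi>" using q1 i qn by (auto simp: Jset_def)
    qed
    have "1 - \<eta> / 3 < F \<xi>" by (fact Fxi)
    also have "F \<xi> \<le> integral {0..real q / n} w" unfolding F_def
    proof (rule integral_subset_le)
      show "{0..\<xi>} \<subseteq> {0..real q / n}" using q1 n1 by (auto simp: field_simps)
      show "w integrable_on {0..\<xi>}" by (rule integrable_subinterval_real[OF wi]) (use xi in auto)
      show "w integrable_on {0..real q / n}" by (rule integrable_subinterval_real[OF wi]) (use qxi2 xi2 in auto)
      show "\<forall>x\<in>{0..real q / n}. 0 \<le> w x" using w0 qxi2 xi2 by auto
    qed
    also have "\<dots> = (\<Sum>i<q. integral {real i / n..real (i+1) / n} w)"
      by (rule int_split[OF wi n1(1) qn])
    also have "\<dots> \<le> (\<Sum>i<q. (w (real i / n) + \<eta> / 3) / n)"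
    proof (rule sum_mono)
      fix i assume i: "i \<in> {..<q}"
      have sub: "{real i / n..real (i+1) / n} \<subseteq> {0..\<xi>2}"
      proof -
        have "real (i+1) / n \<le> real q / n" using i n1 by (intro divide_right_mono) auto
        then show ?thesis using qxi2 by auto
      qed
      have "integral {real i / n..real (i+1) / n} w \<le> integral {real i / n..real (i+1) / n} (\<lambda>x. w (real i / n) + \<eta> / 3)"
      proof (rule Henstock_Kurzweil_Integration.integral_le)
        show "w integrable_on {real i / n..real (i+1) / n}"
          using wi sub xi2 by (intro integrable_subinterval_real[OF wi]) auto
        show "(\<lambda>x. w (real i / n) + \<eta> / 3) integrable_on {real i / n..real (i+1) / n}" by (rule integrable_const_ivl)
        fix x assume x: "x \<in> {real i / n..real (i+1) / n}"
        have "real i / n \<in> {real i / n..real (i+1) / n}" using n1 by (auto intro: divide_right_mono)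
        then have "real i / n \<in> {0..\<xi>2}" using sub by (rule subsetD[rotated])
        moreover have "x \<in> {0..\<xi>2}" using sub x by (rule subsetD)
        moreover have "dist x (real i / n) < du"
        proof -
          have "x - real i / n \<le> real (i+1) / n - real i / n" using x by auto
          also have "\<dots> = 1 / n" by (simp add: add_divide_distrib)
          finally show ?thesis using x inv1 by (auto simp: dist_real_def)
        qed
        ultimately have "dist (w x) (w (real i / n)) < \<eta> / 3" by (rule du(2))
        then show "w x \<le> w (real i / n) + \<eta> / 3" unfolding dist_real_def by arith
      qed
      also have "\<dots> = (w (real i / n) + \<eta> / 3) / n" using n1 by (simp add: field_simps)
      finally show "integral {real i / n..real (i+1) / n} w \<le> (w (real i / n) + \<eta> / 3) / n" .
    qed
    also have "\<dots> = (\<Sum>i<q. w (real i / n)) / n + real q * (\<eta> / 3) / n"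
      by (simp add: sum.distrib add_divide_distrib sum_divide_distrib)
    also have "(\<Sum>i<q. w (real i / n)) = (if q = 0 then 0 else w 0) + (\<Sum>i\<in>{1..<q}. w (real i / n))"
    proof (cases "q = 0")
      case False
      then have "{..<q} = insert 0 {1..<q}" by auto
      then show ?thesis using False by simp
    qed simp
    also have "real q * (\<eta> / 3) / n \<le> \<eta> / 3"
      using qn n1 eta by (simp add: field_simps mult_right_mono)
    finally have "1 - \<eta> / 3 < ((if q = 0 then 0 else w 0) + (\<Sum>i\<in>{1..<q}. w (real i / n))) / n + \<eta> / 3"
      by simp
    moreover have "(if q = 0 then 0 else w 0) / n \<le> \<eta> / 3"
    proof -
      have "w 0 / n \<le> \<bar>w 0\<bar> / n" using n1 by (intro divide_right_mono) auto
      then show ?thesis using inv3 eta by auto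
    qed
    ultimately show "1 - \<eta> \<le> (\<Sum>i\<in>Jset n \<xi>. w (real i / real n)) / n"
      unfolding J by (simp only: add_divide_distrib)
  qed
qed


lemma psi_eq: "psi a n z = (\<lambda>x. (\<lambda>k. if k = 0 then 0 else Tmap a n z k) (nat \<lfloor>real n * x\<rfloor>))"
  by (simp add: psi_def Let_def fun_eq_iff)

lemma phi_eq: "phi a n M = (\<lambda>x. (\<lambda>k. \<integral>z. (if k = 0 then 0 else Tmap a n z k) \<partial>M) (nat \<lfloor>real n * x\<rfloor>))"
  by (simp add: phi_def psi_def Let_def fun_eq_iff)

lemma W1_psi:
  assumes n: "n \<ge> 1"
  shows "W1 (distr unit_leb borel (psi a n z)) (distr unit_leb borel (phi a n M))
     \<le> ennreal ((\<Sum>k<n. \<bar>(if k = 0 then 0 else Tmap a n z k) - (\<integral>z. (if k = 0 then 0 else Tmap a n z k) \<partial>M)\<bar>) / n)"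
  unfolding psi_eq phi_eq by (rule W1_step[OF n])

lemma outer_prob_le:
  assumes "A \<in> sets M" "S \<inter> space M \<subseteq> A"
  shows "outer_prob M S \<le> measure M A"
  unfolding outer_prob_def
  by (rule cInf_lower) (use assms in \<open>auto intro!: bdd_belowI[where m=0]\<close>)

lemma lin5:
  fixes e x \<eta> s \<epsilon> :: real
  shows "e \<le> (x + \<eta>) / 2 + 2 * (1 - s) \<Longrightarrow> x \<le> \<eta> \<Longrightarrow> s \<ge> 1 - \<eta> - \<epsilon> \<Longrightarrow> \<epsilon> \<le> \<eta> \<Longrightarrow> e \<le> 5 * \<eta>"
  by (simp add: field_simps)

lemma outer_prob_nonneg: "outer_prob M S \<ge> 0"
  unfolding outer_prob_def
  by (rule cInf_greatest) auto

theorem lemma3p9: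
  fixes \<alpha> :: real and \<alpha>s :: "nat \<Rightarrow> real" and w :: "real \<Rightarrow> real"
    and \<tau> :: "nat \<Rightarrow> (nat \<Rightarrow> real) measure" and \<delta> :: real
  assumes "0 < \<alpha>" "\<alpha> < 2"
    and "\<And>n. 0 < \<alpha>s n \<and> \<alpha>s n < 2"
    and "\<alpha>s \<longlonglongrightarrow> \<alpha>"
    and "\<And>x. x \<in> {0..1} \<Longrightarrow> 0 \<le> w x"
    and "set_integrable lborel {0..1} w"
    and "(LINT x:{0..1}|lborel. w x) = 1"
    and "continuous_on {0..<1} w"
    and "\<And>n. n \<ge> 1 \<Longrightarrow> prob_space (\<tau> n)"
    and "\<And>n. n \<ge> 1 \<Longrightarrow> sets (\<tau> n) = sets (PiM {1..n} (\<lambda>_. borel))"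
    and "\<And>n. n \<ge> 1 \<Longrightarrow> (AE z in \<tau> n. z \<in> simplex1 n)"
    and "pre_chaotic w \<tau>"
    and "\<delta> > 0"
  shows "(\<lambda>n. outer_prob (\<tau> n)
            {z \<in> space (\<tau> n).
               W1 (distr unit_leb borel (psi (\<alpha>s n) n z))
                  (distr unit_leb borel (phi (\<alpha>s n) n (\<tau> n))) > ennreal \<delta>})
         \<longlonglongrightarrow> 0"
proof (rule LIMSEQ_I)
  note a = assms
  fix r :: real assume r: "r > 0"
  define \<eta> where "\<eta> = r * \<delta> / 10"
  have eta: "\<eta> > 0" unfolding \<eta>_def using r a(13) by simp
  obtain \<xi> where xi: "0 < \<xi>" "\<xi> < 1"
    and N1ex: "\<exists>N. \<forall>n\<ge>N. (\<Sum>i\<in>Jset n \<xi>. w (real i / real n)) / n \<ge> 1 - \<eta>"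
    using riemann[OF a(5,6,7,8) eta] by blast
  obtain N1 where N1: "\<And>n. n \<ge> N1 \<Longrightarrow> (\<Sum>i\<in>Jset n \<xi>. w (real i / real n)) / n \<ge> 1 - \<eta>"
    using N1ex by blast
  obtain C where C: "\<forall>\<epsilon>>0. \<exists>n\<epsilon>::nat. \<forall>n>n\<epsilon>. \<forall>j k.
         1 \<le> j \<and> 1 \<le> k \<and> real j < real n * \<xi> \<and> real k < real n * \<xi> \<longrightarrow>
           \<bar>real n * mean_coord (\<tau> n) j - w (real j / real n)\<bar> < \<epsilon>
         \<and> var_coord (\<tau> n) j \<le> C * \<epsilon> / real n
         \<and> (j \<noteq> k \<longrightarrow> \<bar>cov_coord (\<tau> n) j k\<bar> \<le> C * \<epsilon> / (real n)\<^sup>2)"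
    using a(12) xi unfolding pre_chaotic_def by blast
  define C' where "C' = max C 0"
  have C'0: "C' \<ge> 0" "C \<le> C'" unfolding C'_def by auto
  define \<epsilon> where "\<epsilon> = min \<eta> ((1 - \<xi>)\<^sup>2 * \<eta>\<^sup>2 / (2 * C' + 1))"
  have eps: "\<epsilon> > 0" unfolding \<epsilon>_def using eta xi C'0 by auto
  have epsle: "\<epsilon> \<le> \<eta>" unfolding \<epsilon>_def by simp
  obtain ne :: nat where ne: "\<And>n j k. n > ne \<Longrightarrow> 1 \<le> j \<Longrightarrow> 1 \<le> k \<Longrightarrow> real j < real n * \<xi> \<Longrightarrow> real k < real n * \<xi> \<Longrightarrow>
           \<bar>real n * mean_coord (\<tau> n) j - w (real j / real n)\<bar> < \<epsilon>
         \<and> var_coord (\<tau> n) j \<le> C * \<epsilon> / real n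
         \<and> (j \<noteq> k \<longrightarrow> \<bar>cov_coord (\<tau> n) j k\<bar> \<le> C * \<epsilon> / (real n)\<^sup>2)"
    using C eps by blast
  show "\<exists>no. \<forall>n\<ge>no. norm (outer_prob (\<tau> n)
            {z \<in> space (\<tau> n).
               W1 (distr unit_leb borel (psi (\<alpha>s n) n z))
                  (distr unit_leb borel (phi (\<alpha>s n) n (\<tau> n))) > ennreal \<delta>} - 0) < r"
  proof (intro exI allI impI)
    fix n assume nge: "max (max N1 (Suc ne)) 2 \<le> n"
    have n2: "n \<ge> 2" and nN1: "n \<ge> N1" and nne: "n > ne" using nge by auto
    have n1: "n \<ge> 1" using n2 by simp
    define M where "M = \<tau> n"
    define an where "an = \<alpha>s n"
    have g: "good M n" unfolding good_def M_def using a(9,10,11) n1 by auto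
    interpret prob_space M using g good_prob by blast
    have an: "0 < an" "an < 2" unfolding an_def using a(3) by auto
    have Jmem: "1 \<le> j \<and> real j < real n * \<xi>" if "j \<in> Jset n \<xi>" for j
      using that unfolding Jset_def by auto
    define K where "K = C' * \<epsilon>"
    have K0: "K \<ge> 0" unfolding K_def using C'0 eps by simp
    have vb: "var_coord M j \<le> K / n" if "j \<in> Jset n \<xi>" for j
    proof -
      have "var_coord M j \<le> C * \<epsilon> / real n" using ne[OF nne, of j j] Jmem[OF that] unfolding M_def by auto
      also have "\<dots> \<le> K / n" unfolding K_def using C'0 eps by (intro divide_right_mono mult_right_mono) auto
      finally show ?thesis .
    qed
    have covb: "\<bar>cov_coord M j k\<bar> \<le> K / (real n)\<^sup>2" if "j \<in> Jset n \<xi>" "k \<in> Jset n \<xi>" "j \<noteq> k" for j k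
    proof -
      have "\<bar>cov_coord M j k\<bar> \<le> C * \<epsilon> / (real n)\<^sup>2" using ne[OF nne, of j k] Jmem[OF that(1)] Jmem[OF that(2)] that(3)
        unfolding M_def by auto
      also have "\<dots> \<le> K / (real n)\<^sup>2" unfolding K_def using C'0 eps by (intro divide_right_mono mult_right_mono) auto
      finally show ?thesis .
    qed
    note co = core[OF g n2 an xi eta K0 vb covb]
    define Y where "Y = (\<lambda>z. (\<Sum>k<n. \<bar>(if k = 0 then 0 else Tmap an n z k) - (\<integral>z. (if k = 0 then 0 else Tmap an n z k) \<partial>M)\<bar>) / n)"
    have intY: "integrable M Y" unfolding Y_def using co(1) by simp
    have EY: "(\<integral>z. Y z \<partial>M) \<le> (2 * K * (1 / (1 - \<xi>))\<^sup>2 / \<eta> + \<eta>) / 2 + 2 * (1 - (\<Sum>i\<in>Jset n \<xi>. mean_coord M i))"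
      unfolding Y_def using co(2) by simp
    have t1: "2 * K * (1 / (1 - \<xi>))\<^sup>2 / \<eta> \<le> \<eta>"
    proof -
      have "\<epsilon> \<le> (1 - \<xi>)\<^sup>2 * \<eta>\<^sup>2 / (2 * C' + 1)" unfolding \<epsilon>_def by simp
      then have "\<epsilon> * (2 * C' + 1) \<le> (1 - \<xi>)\<^sup>2 * \<eta>\<^sup>2" using C'0 by (simp add: field_simps)
      moreover have "2 * K \<le> \<epsilon> * (2 * C' + 1)" unfolding K_def using eps by (simp add: algebra_simps)
      ultimately have "2 * K \<le> (1 - \<xi>)\<^sup>2 * \<eta>\<^sup>2" by linarith
      then have h: "2 * K \<le> \<eta>\<^sup>2 * (1 - \<xi>)\<^sup>2" by (simp add: mult.commute)
      have p: "0 < (1 - \<xi>)\<^sup>2" using xi by simp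
      have "2 * K * (1 / (1 - \<xi>))\<^sup>2 = 2 * K / (1 - \<xi>)\<^sup>2" by (simp add: power_one_over)
      also have "\<dots> \<le> \<eta>\<^sup>2" using h by (simp add: pos_divide_le_eq[OF p])
      finally have "2 * K * (1 / (1 - \<xi>))\<^sup>2 \<le> \<eta>\<^sup>2" .
      then have "2 * K * (1 / (1 - \<xi>))\<^sup>2 / \<eta> \<le> \<eta>\<^sup>2 / \<eta>" by (rule divide_right_mono) (use eta in simp)
      also have "\<eta>\<^sup>2 / \<eta> = \<eta>" using eta by (simp add: power2_eq_square)
      finally show ?thesis .
    qed
    have t2: "(\<Sum>i\<in>Jset n \<xi>. mean_coord M i) \<ge> 1 - \<eta> - \<epsilon>"
    proof -
      have fin: "finite (Jset n \<xi>)" unfolding Jset_def by simp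
      have cardJ: "real (card (Jset n \<xi>)) \<le> real n"
      proof -
        have "card (Jset n \<xi>) \<le> card {1..n}" unfolding Jset_def by (intro card_mono) auto
        then show ?thesis by simp
      qed
      have "(\<Sum>i\<in>Jset n \<xi>. (w (real i / real n) - \<epsilon>) / n) \<le> (\<Sum>i\<in>Jset n \<xi>. mean_coord M i)"
      proof (rule sum_mono)
        fix i assume i: "i \<in> Jset n \<xi>"
        have "\<bar>real n * mean_coord M i - w (real i / real n)\<bar> < \<epsilon>"
          using ne[OF nne, of i i] Jmem[OF i] unfolding M_def by auto
        then have "w (real i / real n) - \<epsilon> \<le> real n * mean_coord M i" by arith
        then show "(w (real i / real n) - \<epsilon>) / n \<le> mean_coord M i" using n1 by (simp add: field_simps)
      qed
      moreover have "(\<Sum>i\<in>Jset n \<xi>. (w (real i / real n) - \<epsilon>) / n) = (\<Sum>i\<in>Jset n \<xi>. w (real i / real n)) / n - real (card (Jset n \<xi>)) * \<epsilon> / n"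
        by (simp add: sum_subtractf sum_divide_distrib[symmetric] diff_divide_distrib)
      moreover have "real (card (Jset n \<xi>)) * \<epsilon> / n \<le> \<epsilon>"
        using cardJ eps n1 by (simp add: field_simps mult_right_mono)
      moreover have "(\<Sum>i\<in>Jset n \<xi>. w (real i / real n)) / n \<ge> 1 - \<eta>" by (rule N1[OF nN1])
      ultimately show ?thesis by linarith
    qed
    have EY5: "(\<integral>z. Y z \<partial>M) \<le> 5 * \<eta>" by (rule lin5[OF EY t1 t2 epsle])
    have Ymeas[measurable]: "Y \<in> borel_measurable M" using intY by (rule borel_measurable_integrable)
    have sub: "{z \<in> space M. W1 (distr unit_leb borel (psi an n z)) (distr unit_leb borel (phi an n M)) > ennreal \<delta>} \<inter> space M
        \<subseteq> {z \<in> space M. Y z \<ge> \<delta>}"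
    proof safe
      fix z assume z: "z \<in> space M" and W: "ennreal \<delta> < W1 (distr unit_leb borel (psi an n z)) (distr unit_leb borel (phi an n M))"
      have "W1 (distr unit_leb borel (psi an n z)) (distr unit_leb borel (phi an n M)) \<le> ennreal (Y z)"
        unfolding Y_def by (rule W1_psi[OF n1])
      then have "ennreal \<delta> < ennreal (Y z)" using W by (rule order.strict_trans2[rotated])
      then show "\<delta> \<le> Y z" using a(13) by (simp add: ennreal_less_iff)
    qed
    have "outer_prob M {z \<in> space M. W1 (distr unit_leb borel (psi an n z)) (distr unit_leb borel (phi an n M)) > ennreal \<delta>}
        \<le> measure M {z \<in> space M. Y z \<ge> \<delta>}"
      by (rule outer_prob_le[OF _ sub]) measurable
    also have "\<dots> \<le> (\<integral>z. Y z \<partial>M) / \<delta>"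
      using intY a(13) by (intro integral_Markov_inequality_measure[where A="space M"]) (auto simp: Y_def)
    also have "\<dots> \<le> 5 * \<eta> / \<delta>" using EY5 a(13) by (simp add: divide_right_mono)
    also have "\<dots> < r" unfolding \<eta>_def using r a(13) by (simp add: field_simps)
    finally show "norm (outer_prob (\<tau> n)
            {z \<in> space (\<tau> n).
               W1 (distr unit_leb borel (psi (\<alpha>s n) n z))
                  (distr unit_leb borel (phi (\<alpha>s n) n (\<tau> n))) > ennreal \<delta>} - 0) < r"
      unfolding M_def an_def by (simp add: abs_of_nonneg[OF outer_prob_nonneg])
  qed
qed

end
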